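(* Let $\omega\in(0,1/2)$ and $\tau>0$. Suppose the test statistic $z$ satisfies $z\mid\lambda\sim\mathrm{N}(\lambda,1)$, with $\lambda\sim(1-\omega)\delta_0+\omega\,\mathrm{J}(\tau^2)$ under $\mathrm{H}_0$ and $\lambda\sim\omega\delta_0+(1-\omega)\mathrm{J}(\tau^2)$ under $\mathrm{H}_1$. Then the Bayes factor in favor of $\mathrm{H}_1$ is $$\mathrm{BF}^t_{10}(z\mid\tau^2,\omega)=\frac{\omega+(1-\omega)R}{(1-\omega)+\omega R},$$ where $R=m_1(z\mid\tau^2)/m_0(z)$, with $m_0(z)$ the $\mathrm{N}(0,1)$ density at $z$ and $m_1(z\mid\tau^2)=\int \phi(z-\lambda)\,\mathrm{J}(\lambda;\tau^2)\,d\lambda$, and $$R=(1+\tau^2)^{-3/2}\,{}_1F_1\!\left(\tfrac32,\tfrac12;\ \frac{\tau^2z^2}{2(1+\tau^2)}\right).$$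
   Context: $\delta_0$ is the point mass at $0$. $\mathrm{J}(\tau^2)$ is the normal-moment density of order 1: $\mathrm{J}(\lambda;\tau^2)=\frac{\lambda^2}{(2\tau^2)^{3/2}\Gamma(3/2)}\exp\!\big(-\frac{\lambda^2}{2\tau^2}\big)$, $\lambda\in\mathbb{R}$. $\phi$ is the standard normal density. ${}_1F_1(a,b;x)=\sum_{i\ge0}\frac{(a)_i}{(b)_i\,i!}x^i$ is the confluent hypergeometric function, $(a)_i$ the rising factorial. The Bayes factor is the ratio of the marginal density of $z$ under $\mathrm{H}_1$ to that under $\mathrm{H}_0$. *)

theory Defs
  imports "HOL-Probability.Probability"
begin

definition nmom_density :: "real \<Rightarrow> real \<Rightarrow> real" where
  "nmom_density tau2 lam =
     lam\<^sup>2 / ((2 * tau2) powr (3/2) * Gamma (3/2)) * exp (- lam\<^sup>2 / (2 * tau2))"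

definition hyp1F1 :: "real \<Rightarrow> real \<Rightarrow> real \<Rightarrow> real" where
  "hyp1F1 a b x = (\<Sum>i. pochhammer a i / (pochhammer b i * fact i) * x ^ i)"

definition m0 :: "real \<Rightarrow> real" where
  "m0 z = std_normal_density z"

definition m1 :: "real \<Rightarrow> real \<Rightarrow> real" where
  "m1 z tau2 = (LINT lam|lborel. std_normal_density (z - lam) * nmom_density tau2 lam)"

definition marg_H0 :: "real \<Rightarrow> real \<Rightarrow> real \<Rightarrow> real" where
  "marg_H0 z tau2 w = (1 - w) * std_normal_density (z - 0) + w * m1 z tau2"

definition marg_H1 :: "real \<Rightarrow> real \<Rightarrow> real \<Rightarrow> real" where
  "marg_H1 z tau2 w = w * std_normal_density (z - 0) + (1 - w) * m1 z tau2"

definition BF10 :: "real \<Rightarrow> real \<Rightarrow> real \<Rightarrow> real" where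
  "BF10 z tau2 w = marg_H1 z tau2 w / marg_H0 z tau2 w"

end

theory Submission
  imports Defs
begin

lemma poch_ratio: "pochhammer (3/2::real) i = pochhammer (1/2) i * (1 + 2 * real i)"
proof -
  have "pochhammer (1/2::real) (Suc i) = 1/2 * pochhammer (3/2) i"
    by (simp add: pochhammer_rec)
  moreover have "pochhammer (1/2::real) (Suc i) = pochhammer (1/2) i * (1/2 + real i)"
    by (simp add: pochhammer_Suc)
  ultimately show ?thesis by (simp add: algebra_simps)
qed

lemma hyp_eq: "hyp1F1 (3/2) (1/2) x = exp x * (1 + 2 * x)"
proof -
  have pos: "pochhammer (1/2::real) i \<noteq> 0" for i
    by (simp add: pochhammer_eq_0_iff)
  have e: "(\<lambda>n. x ^ n / fact n) sums exp x"
    using exp_converges[of x] by (simp add: divide_inverse mult.commute)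
  have "(\<lambda>n. x * (x ^ n / fact n)) sums (x * exp x)"
    using sums_mult[OF e] by simp
  moreover have "(\<lambda>n. x * (x ^ n / fact n)) = (\<lambda>n. real (Suc n) * x ^ Suc n / fact (Suc n))"
  proof
    fix n
    have "real (Suc n) * x ^ Suc n / fact (Suc n) = (real (Suc n) / real (Suc n)) * (x ^ Suc n / fact n)"
      by (simp only: fact_Suc of_nat_mult) (simp add: divide_simps)
    then show "x * (x ^ n / fact n) = real (Suc n) * x ^ Suc n / fact (Suc n)" by simp
  qed
  ultimately have "(\<lambda>n. real (Suc n) * x ^ Suc n / fact (Suc n)) sums (x * exp x)" by simp
  then have g: "(\<lambda>n. real n * x ^ n / fact n) sums (x * exp x)"
    using sums_Suc_iff[where f="\<lambda>n. real n * x ^ n / fact n"] by simp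
  have "(\<lambda>n. x ^ n / fact n + 2 * (real n * x ^ n / fact n)) sums (exp x + 2 * (x * exp x))"
    by (intro sums_add sums_mult e g)
  moreover have "(\<lambda>n. x ^ n / fact n + 2 * (real n * x ^ n / fact n)) =
      (\<lambda>i. pochhammer (3/2) i / (pochhammer (1/2) i * fact i) * x ^ i)"
    using pos by (auto simp: fun_eq_iff poch_ratio field_simps)
  ultimately have "(\<lambda>i. pochhammer (3/2) i / (pochhammer (1/2) i * fact i) * x ^ i) sums (exp x + 2 * (x * exp x))"
    by simp
  then show ?thesis unfolding hyp1F1_def
    by (simp add: sums_unique[symmetric] algebra_simps)
qed

lemma second_moment:
  assumes "0 < \<sigma>"
  shows "(LINT x|lborel. normal_density \<mu> \<sigma> x * x\<^sup>2) = \<sigma>\<^sup>2 + \<mu>\<^sup>2"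
proof -
  have a: "has_bochner_integral lborel (\<lambda>x. normal_density \<mu> \<sigma> x * (x - \<mu>) ^ 2) (\<sigma>\<^sup>2)"
    using normal_moment_even[OF assms, of \<mu> 1] by simp
  have b: "has_bochner_integral lborel (\<lambda>x. 2 * \<mu> * (normal_density \<mu> \<sigma> x * x)) (2 * \<mu> * \<mu>)"
    by (intro has_bochner_integral_mult_right normal_moment_nz_1 assms)
  have c: "has_bochner_integral lborel (\<lambda>x. \<mu>\<^sup>2 * normal_density \<mu> \<sigma> x) (\<mu>\<^sup>2 * 1)"
    by (intro has_bochner_integral_mult_right has_bochner_integral_integrable)
       (use assms integral_normal_density[OF assms] integrable_normal_density[OF assms] in
        \<open>metis has_bochner_integral_integrable\<close>)
  have "has_bochner_integral lborel (\<lambda>x. normal_density \<mu> \<sigma> x * (x - \<mu>) ^ 2 + 2 * \<mu> * (normal_density \<mu> \<sigma> x * x) - \<mu>\<^sup>2 * normal_density \<mu> \<sigma> x) (\<sigma>\<^sup>2 + 2 * \<mu> * \<mu> - \<mu>\<^sup>2 * 1)"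
    by (intro has_bochner_integral_add has_bochner_integral_diff a b c)
  moreover have "(\<lambda>x. normal_density \<mu> \<sigma> x * (x - \<mu>) ^ 2 + 2 * \<mu> * (normal_density \<mu> \<sigma> x * x) - \<mu>\<^sup>2 * normal_density \<mu> \<sigma> x) = (\<lambda>x. normal_density \<mu> \<sigma> x * x\<^sup>2)"
    by (auto simp: fun_eq_iff power2_eq_square algebra_simps)
  ultimately have "has_bochner_integral lborel (\<lambda>x. normal_density \<mu> \<sigma> x * x\<^sup>2) (\<sigma>\<^sup>2 + 2 * \<mu> * \<mu> - \<mu>\<^sup>2 * 1)"
    by simp
  then show ?thesis by (simp add: has_bochner_integral_integral_eq power2_eq_square)
qed


lemma pointwise:
  assumes t: "0 < t"
  shows "std_normal_density (z - l) * nmom_density t l =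
    (exp (- z\<^sup>2 / (2 * (1 + t))) / (sqrt (2 * pi * (1 + t)) * t)) *
    (normal_density (z * t / (1 + t)) (sqrt (t / (1 + t))) l * l\<^sup>2)"
proof -
  have G: "Gamma (3/2::real) = sqrt pi / 2"
  proof -
    have "(1/2::real) \<notin> \<int>\<^sub>\<le>\<^sub>0" by (auto dest: nonpos_Ints_nonpos)
    then show ?thesis using Gamma_plus1[of "1/2::real"] Gamma_one_half_real by simp
  qed
  have P: "(2 * t) powr (3/2) = 2 * t * sqrt (2 * t)"
  proof -
    have "(2 * t) powr (3/2) = (2 * t) powr 1 * (2 * t) powr (1/2)"
      using powr_add[of "2*t" 1 "1/2"] by simp
    also have "\<dots> = 2 * t * sqrt (2 * t)"
      using t by (simp add: powr_half_sqrt)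
    finally show ?thesis .
  qed
  have S: "(sqrt (t / (1 + t)))\<^sup>2 = t / (1 + t)" using t by simp
  have E: "exp (- (z - l)\<^sup>2 / 2) * exp (- l\<^sup>2 / (2 * t)) =
      exp (- z\<^sup>2 / (2 * (1 + t))) * exp (- (l - z * t / (1 + t))\<^sup>2 / (2 * t / (1 + t)))"
  proof -
    have t0: "t \<noteq> 0" "1 + t \<noteq> 0" using t by auto
    have a: "- (l - z * t / (1 + t))\<^sup>2 / (2 * t / (1 + t)) = - (l * (1 + t) - z * t)\<^sup>2 / (2 * t * (1 + t))"
    proof -
      have "l - z * t / (1 + t) = (l * (1 + t) - z * t) / (1 + t)" using t0 by (simp add: field_simps)
      then have q: "(l - z * t / (1 + t))\<^sup>2 = (l * (1 + t) - z * t)\<^sup>2 / (1 + t)\<^sup>2" by (simp add: power_divide)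
      have r: "- (Y / S\<^sup>2) / (2 * t / S) = - Y / (2 * t * S)" if "S \<noteq> 0" for Y S :: real
        using t0 that by (simp add: field_simps power2_eq_square)
      show ?thesis unfolding q by (rule r[OF t0(2)])
    qed
    have b0: "- (z - l)\<^sup>2 / 2 + - l\<^sup>2 / (2 * t) = - z\<^sup>2 / (2 * S) + - (l * S - z * t)\<^sup>2 / (2 * t * S)"
      if "S = 1 + t" "S \<noteq> 0" for S
      using t0(1) that(2) apply (simp add: field_simps)
      using that(1) apply (simp add: algebra_simps power2_eq_square)
      done
    have b: "- (z - l)\<^sup>2 / 2 + - l\<^sup>2 / (2 * t) = - z\<^sup>2 / (2 * (1 + t)) + - (l * (1 + t) - z * t)\<^sup>2 / (2 * t * (1 + t))"
      by (rule b0[OF refl t0(2)])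
    show ?thesis unfolding exp_add[symmetric] a b ..
  qed
  define C where "C = 1 / (2 * pi * t * sqrt t)"
  have C1: "1 / sqrt (2 * pi) * (1 / (2 * t * sqrt (2 * t) * (sqrt pi / 2))) = C"
  proof -
    have "sqrt (2 * pi) * (2 * t * sqrt (2 * t) * (sqrt pi / 2)) = t * (sqrt (2 * pi) * sqrt (2 * t) * sqrt pi)"
      by simp
    also have "sqrt (2 * pi) * sqrt (2 * t) * sqrt pi = sqrt ((2 * pi) * (2 * t) * pi)"
      by (simp add: real_sqrt_mult)
    also have "(2 * pi) * (2 * t) * pi = (2 * pi)\<^sup>2 * t" by (simp add: power2_eq_square)
    also have "sqrt ((2 * pi)\<^sup>2 * t) = 2 * pi * sqrt t" by (simp add: real_sqrt_mult)
    finally show ?thesis unfolding C_def by (simp add: field_simps)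
  qed
  have C2: "1 / (sqrt (2 * pi * (1 + t)) * t) * (1 / sqrt (2 * pi * (t / (1 + t)))) = C"
  proof -
    have "sqrt (2 * pi * (1 + t)) * sqrt (2 * pi * (t / (1 + t))) = sqrt ((2 * pi * (1 + t)) * (2 * pi * (t / (1 + t))))"
      by (rule real_sqrt_mult[symmetric])
    also have "(2 * pi * (1 + t)) * (2 * pi * (t / (1 + t))) = (2 * pi)\<^sup>2 * t"
      using t by (simp add: power2_eq_square field_simps)
    also have "sqrt ((2 * pi)\<^sup>2 * t) = 2 * pi * sqrt t" by (simp add: real_sqrt_mult)
    finally show ?thesis unfolding C_def by (simp add: field_simps)
  qed
  have L: "std_normal_density (z - l) * nmom_density t l =
     (1 / sqrt (2 * pi) * (1 / (2 * t * sqrt (2 * t) * (sqrt pi / 2)))) * l\<^sup>2 *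
     (exp (- (z - l)\<^sup>2 / 2) * exp (- l\<^sup>2 / (2 * t)))"
    unfolding std_normal_density_def nmom_density_def G P by simp
  have R: "(exp (- z\<^sup>2 / (2 * (1 + t))) / (sqrt (2 * pi * (1 + t)) * t)) *
    (normal_density (z * t / (1 + t)) (sqrt (t / (1 + t))) l * l\<^sup>2) =
    (1 / (sqrt (2 * pi * (1 + t)) * t) * (1 / sqrt (2 * pi * (t / (1 + t))))) * l\<^sup>2 *
    (exp (- z\<^sup>2 / (2 * (1 + t))) * exp (- (l - z * t / (1 + t))\<^sup>2 / (2 * t / (1 + t))))"
    unfolding normal_density_def S by (simp add: mult_ac)
  show ?thesis unfolding L R C1 C2 E ..
qed


lemma m1_eq:
  assumes t: "0 < t"
  shows "m1 z t = (exp (- z\<^sup>2 / (2 * (1 + t))) / (sqrt (2 * pi * (1 + t)) * t)) *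
     (t / (1 + t) + (z * t / (1 + t))\<^sup>2)"
proof -
  have "m1 z t = (LINT l|lborel. (exp (- z\<^sup>2 / (2 * (1 + t))) / (sqrt (2 * pi * (1 + t)) * t)) *
    (normal_density (z * t / (1 + t)) (sqrt (t / (1 + t))) l * l\<^sup>2))"
    unfolding m1_def using pointwise[OF t] by simp
  also have "\<dots> = (exp (- z\<^sup>2 / (2 * (1 + t))) / (sqrt (2 * pi * (1 + t)) * t)) *
    (LINT l|lborel. normal_density (z * t / (1 + t)) (sqrt (t / (1 + t))) l * l\<^sup>2)"
    by (rule integral_mult_right_zero)
  also have "(LINT l|lborel. normal_density (z * t / (1 + t)) (sqrt (t / (1 + t))) l * l\<^sup>2) =
      (sqrt (t / (1 + t)))\<^sup>2 + (z * t / (1 + t))\<^sup>2"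
    by (rule second_moment) (use t in simp)
  also have "(sqrt (t / (1 + t)))\<^sup>2 = t / (1 + t)" using t by simp
  finally show ?thesis .
qed

lemma alg_aux:
  fixes a r E1 E0 S t z :: real
  assumes "a > 0" "r > 0" "E0 > 0" "S > 0" "t > 0"
  shows "E1 / (a * r * t) * (t / S + (z * t / S)\<^sup>2) / (1 / a * E0) =
    1 / (S * r) * (E1 / E0 * (1 + 2 * (t * z\<^sup>2 / (2 * S))))"
  using assms by (simp add: field_simps power2_eq_square)

lemma R_eq:
  assumes t: "0 < t"
  shows "m1 z t / m0 z = (1 + t) powr (-3/2) * hyp1F1 (3/2) (1/2) (t * z\<^sup>2 / (2 * (1 + t)))"
proof -
  define S where "S = 1 + t"
  have S: "S > 0" using t by (auto simp: S_def)
  have P: "S powr (-3/2) = 1 / (S * sqrt S)"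
  proof -
    have "S powr (3/2) = S powr 1 * S powr (1/2)"
      using powr_add[of S 1 "1/2"] by simp
    also have "\<dots> = S * sqrt S"
      using S by (simp add: powr_half_sqrt)
    finally show ?thesis by (simp add: powr_minus_divide)
  qed
  define x where "x = t * z\<^sup>2 / (2 * S)"
  have ex: "exp x = exp (- z\<^sup>2 / (2 * S)) / exp (- z\<^sup>2 / 2)"
  proof -
    have "t * z\<^sup>2 / (2 * S) = - z\<^sup>2 / (2 * S) - - z\<^sup>2 / 2"
      using S unfolding S_def by (simp add: field_simps)
    then show ?thesis unfolding exp_diff[symmetric] x_def by simp
  qed
  have sq: "sqrt (2 * pi * S) = sqrt (2 * pi) * sqrt S" by (simp add: real_sqrt_mult)
  have pos: "sqrt (2 * pi) > 0" "sqrt S > 0" "exp (- z\<^sup>2 / 2) > 0" using S by auto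
  have "m1 z t / m0 z = (exp (- z\<^sup>2 / (2 * S)) / (sqrt (2 * pi) * sqrt S * t)) *
     (t / S + (z * t / S)\<^sup>2) / (1 / sqrt (2 * pi) * exp (- z\<^sup>2 / 2))"
    unfolding m1_eq[OF t] m0_def std_normal_density_def S_def[symmetric] sq ..
  also have "\<dots> = 1 / (S * sqrt S) * (exp x * (1 + 2 * x))"
    unfolding ex unfolding x_def by (rule alg_aux) (use pos S t in auto)
  finally show ?thesis unfolding hyp_eq S_def[symmetric] unfolding x_def[symmetric] P .
qed

lemma div_div_cancel: "(a::real) \<noteq> 0 \<Longrightarrow> (p / a) / (q / a) = p / q"
  by simp

lemma BF_eq:
  "BF10 z t w = (w + (1 - w) * (m1 z t / m0 z)) / ((1 - w) + w * (m1 z t / m0 z))"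
proof -
  have a: "m0 z > 0" unfolding m0_def by (simp add: normal_density_pos)
  have e1: "(w + (1 - w) * (m1 z t / m0 z)) = (w * m0 z + (1 - w) * m1 z t) / m0 z"
    using a by (simp add: field_simps)
  have e2: "((1 - w) + w * (m1 z t / m0 z)) = ((1 - w) * m0 z + w * m1 z t) / m0 z"
    using a by (simp add: field_simps)
  have b: "BF10 z t w = (w * m0 z + (1 - w) * m1 z t) / ((1 - w) * m0 z + w * m1 z t)"
    unfolding BF10_def marg_H1_def marg_H0_def m0_def by simp
  show ?thesis unfolding e1 e2 b using a by (simp add: div_div_cancel[of "m0 z"])
qed

theorem proposition4:
  fixes w tau2 z :: real
  assumes "0 < w" "w < 1/2" "0 < tau2"
  defines "R \<equiv> m1 z tau2 / m0 z"
  shows "BF10 z tau2 w = (w + (1 - w) * R) / ((1 - w) + w * R) \<and>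
         R = (1 + tau2) powr (-3/2) *
             hyp1F1 (3/2) (1/2) (tau2 * z\<^sup>2 / (2 * (1 + tau2)))"
  unfolding R_def by (rule conjI[OF BF_eq R_eq[OF assms(3)]])

end
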